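(* Let $T(n) = (3n+1)/2^{v_2(3n+1)}$ for odd $n\ge1$, let $n_0$ be an odd positive integer with orbit $n_{t+1} = T(n_t)$, and let $X_t = \mathbf{1}[n_t \equiv 1 \pmod 4]$. Let $t \ge 1$ be a burst-to-gap transition, i.e. $X_{t-1} = 1$ and $X_t = 0$, and let $G \ge 1$ be the length of the gap run starting at $t$ (the number of consecutive indices $s \ge t$ with $X_s = 0$). Then $n_t \equiv 3 \pmod 4$, and moreover: (a) $G = 1$ if and only if $n_t \equiv 3 \pmod 8$; (b) $G \ge 2$ if and only if $n_t \equiv 7 \pmod 8$.
   Context: $v_2$ denotes the $2$-adic valuation. $X_t = 1$ is called a burst step and $X_t = 0$ a gap step; equivalently $X_t = \mathbf{1}[v_2(3n_t+1)\ge 2]$. *)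

theory Defs
  imports "HOL-Computational_Algebra.Computational_Algebra"
begin

definition v2 :: "nat \<Rightarrow> nat" where
  "v2 m = multiplicity (2::nat) m"

definition syr :: "nat \<Rightarrow> nat" where
  "syr n = (3 * n + 1) div 2 ^ v2 (3 * n + 1)"

definition orbit :: "nat \<Rightarrow> nat \<Rightarrow> nat" where
  "orbit n0 t = (syr ^^ t) n0"

definition burst :: "nat \<Rightarrow> nat \<Rightarrow> bool" where
  "burst n0 t \<longleftrightarrow> orbit n0 t mod 4 = 1"

end

theory Submission
  imports Defs
begin

lemma syr_odd: "odd (syr n)"
  unfolding syr_def v2_def
  using multiplicity_decompose[where p="2::nat" and x="3*n+1"] by simp

lemma syr_3mod4:
  assumes "m mod 4 = (3::nat)"
  shows "syr m = (3*m+1) div 2"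
proof -
  obtain k where k: "m = 4*k+3" using assms by (metis div_mod_decomp mult.commute)
  have e: "3*m+1 = 2 * (6*k+5)" using k by simp
  have "v2 (3*m+1) = 1"
    unfolding v2_def e
    by (subst multiplicity_times_same) (auto intro: not_dvd_imp_multiplicity_0)
  thus ?thesis unfolding syr_def by simp
qed

lemma orbit_Suc: "orbit n0 (Suc s) = syr (orbit n0 s)"
  unfolding orbit_def by simp

theorem lemma4p1:
  fixes n0 t G :: nat
  assumes "odd n0" and "n0 \<ge> 1"
    and "t \<ge> 1"
    and "burst n0 (t - 1)" and "\<not> burst n0 t"
    and "G \<ge> 1"
    and "\<forall>s. t \<le> s \<and> s < t + G \<longrightarrow> \<not> burst n0 s"
    and "burst n0 (t + G)"
  shows "orbit n0 t mod 4 = 3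
    \<and> (G = 1 \<longleftrightarrow> orbit n0 t mod 8 = 3)
    \<and> (G \<ge> 2 \<longleftrightarrow> orbit n0 t mod 8 = 7)"
proof -
  define m where "m = orbit n0 t"
  obtain u where u: "t = Suc u" using assms(3) by (cases t) auto
  have "odd m" unfolding m_def u orbit_Suc by (rule syr_odd)
  moreover have "m mod 4 \<noteq> 1" using assms(5) unfolding burst_def m_def by simp
  ultimately have m4: "m mod 4 = 3" by presburger
  have nx: "orbit n0 (Suc t) = (3*m+1) div 2"
    unfolding orbit_Suc m_def[symmetric] using syr_3mod4[OF m4] .
  have m8: "m mod 8 = 3 \<or> m mod 8 = 7" using m4 by presburger
  have c1: "burst n0 (Suc t) \<longleftrightarrow> m mod 8 = 3"
    unfolding burst_def nx using m4 by presburger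
  have "G = 1 \<longleftrightarrow> m mod 8 = 3"
  proof
    assume "G = 1" thus "m mod 8 = 3" using assms(8) c1 by simp
  next
    assume "m mod 8 = 3"
    hence "burst n0 (Suc t)" using c1 by simp
    show "G = 1"
    proof (rule ccontr)
      assume "G \<noteq> 1"
      hence "t \<le> Suc t \<and> Suc t < t + G" using assms(6) by simp
      thus False using assms(7) \<open>burst n0 (Suc t)\<close> by blast
    qed
  qed
  moreover have "G \<ge> 2 \<longleftrightarrow> G \<noteq> 1" using assms(6) by linarith
  ultimately show ?thesis using m4 m8 unfolding m_def by force
qed

end
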